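(* Let $f\in\mathbb Q(x)$ be a rational function with rational coefficients that is defined on $(0,1)$ and satisfies $0<f(p)<1$ for all $p\in(0,1)$. Then there exist an integer $k\ge0$ and integers $0\le d_i\le e_i$ ($i=0,\dots,k$) such that, with $d(p)=\sum_{i=0}^k d_ip^i(1-p)^{k-i}$ and $e(p)=\sum_{i=0}^k e_ip^i(1-p)^{k-i}$, one has $e(p)\neq0$ and $f(p)=d(p)/e(p)$ for all $p\in(0,1)$. *)

theory Defs
  imports "HOL-Analysis.Analysis" "HOL-Computational_Algebra.Polynomial_Factorial"
begin

definition rpoly :: "rat poly \<Rightarrow> real \<Rightarrow> real" where
  "rpoly P x = poly (map_poly of_rat P) x"

end

theory Submission
  imports Defs
begin

lemma rpoly_altdef: "rpoly H x = (\<Sum>i\<le>degree H. of_rat (coeff H i) * x ^ i)"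
  unfolding rpoly_def poly_altdef
  by (simp add: degree_map_poly coeff_map_poly)

lemma rpoly_of_rat: "rpoly H (of_rat r) = of_rat (poly H r)"
  by (simp add: rpoly_altdef poly_altdef of_rat_sum of_rat_mult of_rat_power)

lemma map_rat_add: "map_poly (of_rat::rat\<Rightarrow>real) (p + q) = map_poly of_rat p + map_poly of_rat q"
  by (rule poly_eqI) (simp add: coeff_map_poly of_rat_add)

lemma map_rat_mult: "map_poly (of_rat::rat\<Rightarrow>real) (p * q) = map_poly of_rat p * map_poly of_rat q"
  by (rule poly_eqI) (simp add: coeff_map_poly coeff_mult of_rat_sum of_rat_mult)

lemma map_rat_minus: "map_poly (of_rat::rat\<Rightarrow>real) (- p) = - map_poly of_rat p"
  by (rule poly_eqI) (simp add: coeff_map_poly of_rat_minus)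

lemma map_rat_diff: "map_poly (of_rat::rat\<Rightarrow>real) (p - q) = map_poly of_rat p - map_poly of_rat q"
  by (rule poly_eqI) (simp add: coeff_map_poly of_rat_diff)

lemma rpoly_add[simp]: "rpoly (p + q) x = rpoly p x + rpoly q x"
  by (simp add: rpoly_def map_rat_add)
lemma rpoly_mult[simp]: "rpoly (p * q) x = rpoly p x * rpoly q x"
  by (simp add: rpoly_def map_rat_mult)
lemma rpoly_minus[simp]: "rpoly (- p) x = - rpoly p x"
  by (simp add: rpoly_def map_rat_minus)
lemma rpoly_diff[simp]: "rpoly (p - q) x = rpoly p x - rpoly q x"
  by (simp add: rpoly_def map_rat_diff)
lemma rpoly_0[simp]: "rpoly 0 x = 0"
  by (simp add: rpoly_def)
lemma rpoly_1[simp]: "rpoly 1 x = 1"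
  by (simp add: rpoly_def)
lemma rpoly_power[simp]: "rpoly (p ^ n) x = rpoly p x ^ n"
  by (induction n) (simp_all del: power_Suc add: power_Suc[of p] power_Suc[of "rpoly p x"])
lemma rpoly_pCons[simp]: "rpoly (pCons a p) x = of_rat a + x * rpoly p x"
  by (simp add: rpoly_def map_poly_pCons)
lemma rpoly_const[simp]: "rpoly [:a:] x = of_rat a"
  by simp
lemma rpoly_smult[simp]: "rpoly (smult a p) x = of_rat a * rpoly p x"
proof -
  have "map_poly (of_rat::rat\<Rightarrow>real) (smult a p) = smult (of_rat a) (map_poly of_rat p)"
    by (rule poly_eqI) (simp add: coeff_map_poly of_rat_mult)
  then show ?thesis by (simp add: rpoly_def)
qed

lemma prod_diff_bound:
  fixes a b :: "nat \<Rightarrow> real"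
  assumes "\<forall>l<j. \<bar>a l\<bar> \<le> 1 \<and> \<bar>b l\<bar> \<le> 1"
  shows "\<bar>(\<Prod>l<j. a l) - (\<Prod>l<j. b l)\<bar> \<le> (\<Sum>l<j. \<bar>a l - b l\<bar>)"
  using assms
proof (induction j)
  case 0
  then show ?case by simp
next
  case (Suc j)
  define A where "A = (\<Prod>l<j. a l)"
  define B where "B = (\<Prod>l<j. b l)"
  have hA: "\<bar>A\<bar> \<le> 1" unfolding A_def abs_prod
    by (rule prod_le_1) (use Suc.prems in auto)
  have hb: "\<bar>b j\<bar> \<le> 1" using Suc.prems by auto
  have IH: "\<bar>A - B\<bar> \<le> (\<Sum>l<j. \<bar>a l - b l\<bar>)" unfolding A_def B_def using Suc by auto
  have "A * a j - B * b j = A * (a j - b j) + (A - B) * b j" by algebra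
  then have "\<bar>A * a j - B * b j\<bar> \<le> \<bar>A\<bar> * \<bar>a j - b j\<bar> + \<bar>A - B\<bar> * \<bar>b j\<bar>"
    by (metis abs_mult abs_triangle_ineq)
  also have "\<dots> \<le> 1 * \<bar>a j - b j\<bar> + \<bar>A - B\<bar> * 1"
    by (intro add_mono mult_mono) (use hA hb in auto)
  finally show ?case using IH by (simp add: A_def B_def)
qed

lemma binom_ratio:
  fixes i j n :: nat
  assumes "j \<le> n"
  shows "real (i choose j) / real (n choose j) = (\<Prod>l<j. (real i - real l) / (real n - real l))"
proof -
  have h0: "fact j * real (k choose j) = (\<Prod>l<j. real k - real l)" for k
    using gbinomial_mult_fact[of j "real k"] by (simp add: binomial_gbinomial atLeast0LessThan)
  have h: "real (k choose j) = (\<Prod>l<j. real k - real l) / fact j" for k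
    using h0[of k] by (simp add: field_simps)
  have nz: "(\<Prod>l<j. real n - real l) \<noteq> 0" using assms by (simp add: prod_zero_iff)
  show ?thesis unfolding h prod_dividef using nz by simp
qed

lemma sum_shift_if:
  fixes g :: "nat \<Rightarrow> 'a::comm_monoid_add"
  assumes "a + n \<le> N"
  shows "(\<Sum>i\<le>N. if a \<le> i \<and> i \<le> a + n then g (i - a) else 0) = (\<Sum>t\<le>n. g t)"
proof -
  have "(\<Sum>i\<le>N. if a \<le> i \<and> i \<le> a + n then g (i - a) else 0) = (\<Sum>i\<in>{a..a+n}. g (i - a))"
    using assms by (intro sum.mono_neutral_cong_right) auto
  also have "\<dots> = (\<Sum>i\<in>{0+a..n+a}. g (i - a))" by (simp add: add.commute)
  also have "\<dots> = (\<Sum>t\<in>{0..n}. g t)" by (subst sum.shift_bounds_cl_nat_ivl) simp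
  finally show ?thesis by (simp add: atLeast0AtMost)
qed

lemma mono_bern:
  fixes p :: real
  assumes "j \<le> n"
  shows "real (n choose j) * p ^ j = (\<Sum>i\<le>n. real (i choose j) * real (n choose i) * p ^ i * (1 - p) ^ (n - i))"
proof -
  have "(\<Sum>i\<le>n. real (i choose j) * real (n choose i) * p ^ i * (1 - p) ^ (n - i))
      = (\<Sum>i\<le>n. if j \<le> i \<and> i \<le> j + (n - j) then
           real (n choose j) * p ^ j * (real ((n - j) choose (i - j)) * p ^ (i - j) * (1 - p) ^ ((n - j) - (i - j))) else 0)"
  proof (intro sum.cong refl)
    fix i assume i: "i \<in> {..n}"
    show "real (i choose j) * real (n choose i) * p ^ i * (1 - p) ^ (n - i) = (if j \<le> i \<and> i \<le> j + (n - j) then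
           real (n choose j) * p ^ j * (real ((n - j) choose (i - j)) * p ^ (i - j) * (1 - p) ^ ((n - j) - (i - j))) else 0)"
    proof (cases "j \<le> i")
      case True
      have c: "real (n choose i) * real (i choose j) = real (n choose j) * real ((n - j) choose (i - j))"
        using choose_mult[of j i n] True i by (metis of_nat_mult atMost_iff)
      have e1: "p ^ i = p ^ j * p ^ (i - j)" using True by (metis le_add_diff_inverse power_add)
      have e2: "n - i = (n - j) - (i - j)" using True i by auto
      show ?thesis using True i c unfolding e1 e2 by (auto simp: algebra_simps)
    qed auto
  qed
  also have "\<dots> = (\<Sum>t\<le>n-j. real (n choose j) * p ^ j * (real ((n - j) choose t) * p ^ t * (1 - p) ^ ((n - j) - t)))"
    using assms by (intro sum_shift_if) simp
  also have "\<dots> = real (n choose j) * p ^ j * (\<Sum>t\<le>n-j. real ((n - j) choose t) * p ^ t * (1 - p) ^ ((n - j) - t))"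
    by (simp only: sum_distrib_left)
  also have "\<dots> = real (n choose j) * p ^ j * (p + (1 - p)) ^ (n - j)"
    by (simp only: binomial_ring)
  finally show ?thesis by simp
qed


lemma term_bound:
  fixes i j l m n :: nat
  assumes "i \<le> n" "l < j" "j \<le> m" "2 * m < n"
  shows "\<bar>(real i - real l) / (real n - real l)\<bar> \<le> 1"
    and "\<bar>(real i - real l) / (real n - real l) - real i / real n\<bar> \<le> 2 * real m / real n"
proof -
  have nl: "real n - real l > 0" using assms by simp
  have "\<bar>real i - real l\<bar> \<le> real n - real l" using assms by (simp add: abs_le_iff)
  then show "\<bar>(real i - real l) / (real n - real l)\<bar> \<le> 1" using nl by (simp add: abs_divide)
  have n0: "real n > 0" using assms by simp
  have eq: "(real i - real l) / (real n - real l) - real i / real n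
      = - (real l * (real n - real i)) / ((real n - real l) * real n)"
    using nl n0 by (simp add: field_simps)
  have ge: "real l * (real n - real i) \<ge> 0" using assms by simp
  have key: "real l * (real n - real i) \<le> 2 * real m * (real n - real l)"
  proof -
    have "real l * (real n - real i) \<le> real m * real n"
      by (rule mult_mono) (use assms in auto)
    also have "\<dots> \<le> real m * (2 * (real n - real l))"
      by (rule mult_left_mono) (use assms in auto)
    finally show ?thesis by (simp add: algebra_simps)
  qed
  have "\<bar>(real i - real l) / (real n - real l) - real i / real n\<bar>
      = real l * (real n - real i) / ((real n - real l) * real n)"
    unfolding eq using ge nl n0 assms(1) by (simp add: abs_divide abs_mult)
  also have "\<dots> \<le> 2 * real m * (real n - real l) / ((real n - real l) * real n)"
    by (rule divide_right_mono) (use key nl n0 in auto)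
  also have "\<dots> = 2 * real m / real n" using nl by simp
  finally show "\<bar>(real i - real l) / (real n - real l) - real i / real n\<bar> \<le> 2 * real m / real n" .
qed

lemma bern_pos:
  fixes H :: "rat poly"
  assumes pos: "\<And>p::real. 0 \<le> p \<Longrightarrow> p \<le> 1 \<Longrightarrow> rpoly H p > 0"
  shows "\<exists>n0. \<forall>n\<ge>n0. \<exists>c::nat\<Rightarrow>rat. (\<forall>i\<le>n. 0 \<le> c i) \<and>
           (\<forall>p::real. rpoly H p = (\<Sum>i\<le>n. of_rat (c i) * p ^ i * (1 - p) ^ (n - i)))"
proof -
  define m where "m = degree H"
  define f where "f j = (of_rat (coeff H j) :: real)" for j
  have rp: "rpoly H x = (\<Sum>j\<le>m. f j * x ^ j)" for x by (simp add: rpoly_altdef m_def f_def)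
  have cont: "continuous_on {0..1::real} (rpoly H)"
    unfolding rp[abs_def] by (intro continuous_intros)
  obtain x0 where x0: "x0 \<in> {0..1::real}" and mn: "\<forall>y\<in>{0..1}. rpoly H x0 \<le> rpoly H y"
    using continuous_attains_inf[OF compact_Icc _ cont] by auto
  define \<mu> where "\<mu> = rpoly H x0"
  have mupos: "\<mu> > 0" using pos x0 by (auto simp: \<mu>_def)
  define A where "A = (\<Sum>j\<le>m. \<bar>f j\<bar>)"
  have A0: "A \<ge> 0" unfolding A_def by (simp add: sum_nonneg)
  define n0 where "n0 = 2*m + 1 + nat \<lceil>2 * real m ^ 2 * A / \<mu>\<rceil>"
  show ?thesis
  proof (rule exI[of _ n0], intro allI impI)
    fix n assume n: "n0 \<le> n"
    have n2m: "2*m < n" using n by (simp add: n0_def)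
    have "2 * real m ^ 2 * A / \<mu> \<le> real (nat \<lceil>2 * real m ^ 2 * A / \<mu>\<rceil>)"
      by (rule real_nat_ceiling_ge)
    also have "\<dots> < real n" using n by (simp add: n0_def)
    finally have "2 * real m ^ 2 * A < real n * \<mu>" using mupos by (simp add: divide_less_eq)
    then have err: "A * (2 * real m ^ 2 / real n) < \<mu>" using n2m by (simp add: field_simps)
    define S where "S i = (\<Sum>j\<le>m. f j * (real (i choose j) / real (n choose j)))" for i
    define c where "c i = of_nat (n choose i) * (\<Sum>j\<le>m. coeff H j * of_nat (i choose j) / of_nat (n choose j))" for i
    have cS: "of_rat (c i) = real (n choose i) * S i" for i
      by (simp add: c_def S_def f_def of_rat_mult of_rat_sum of_rat_divide)
    have repr: "rpoly H p = (\<Sum>i\<le>n. of_rat (c i) * p ^ i * (1 - p) ^ (n - i))" for p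
    proof -
      have "rpoly H p = (\<Sum>j\<le>m. f j * p ^ j)" by (rule rp)
      also have "\<dots> = (\<Sum>j\<le>m. f j / real (n choose j) * (\<Sum>i\<le>n. real (i choose j) * real (n choose i) * p ^ i * (1 - p) ^ (n - i)))"
      proof (intro sum.cong refl)
        fix j assume j: "j \<in> {..m}"
        then have jn: "j \<le> n" using n2m by auto
        then have nz: "real (n choose j) \<noteq> 0" by simp
        show "f j * p ^ j = f j / real (n choose j) * (\<Sum>i\<le>n. real (i choose j) * real (n choose i) * p ^ i * (1 - p) ^ (n - i))"
          unfolding mono_bern[OF jn, symmetric] using nz by simp
      qed
      also have "\<dots> = (\<Sum>i\<le>n. \<Sum>j\<le>m. f j / real (n choose j) * (real (i choose j) * real (n choose i) * p ^ i * (1 - p) ^ (n - i)))"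
        unfolding sum_distrib_left by (rule sum.swap)
      also have "\<dots> = (\<Sum>i\<le>n. of_rat (c i) * p ^ i * (1 - p) ^ (n - i))"
        by (intro sum.cong refl) (simp add: cS S_def sum_distrib_left sum_distrib_right mult_ac)
      finally show ?thesis .
    qed
    have Spos: "S i > 0" if i: "i \<le> n" for i
    proof -
      define x where "x = real i / real n"
      have x01: "0 \<le> x" "x \<le> 1" using i n2m by (auto simp: x_def)
      have mux: "\<mu> \<le> rpoly H x" using mn x01 by (auto simp: \<mu>_def)
      have tb: "\<bar>real (i choose j) / real (n choose j) - x ^ j\<bar> \<le> 2 * real m ^ 2 / real n" if j: "j \<le> m" for j
      proof -
        have jn: "j \<le> n" using j n2m by simp
        have "\<bar>real (i choose j) / real (n choose j) - x ^ j\<bar>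
            = \<bar>(\<Prod>l<j. (real i - real l) / (real n - real l)) - (\<Prod>l<j. x)\<bar>"
          by (simp add: binom_ratio[OF jn])
        also have "\<dots> \<le> (\<Sum>l<j. \<bar>(real i - real l) / (real n - real l) - x\<bar>)"
          by (rule prod_diff_bound) (use term_bound(1)[OF i _ j n2m] x01 in auto)
        also have "\<dots> \<le> (\<Sum>l<j. 2 * real m / real n)"
          by (rule sum_mono) (use term_bound(2)[OF i _ j n2m] in \<open>auto simp: x_def\<close>)
        also have "\<dots> = real j * (2 * real m / real n)" by simp
        also have "\<dots> \<le> real m * (2 * real m / real n)"
          by (rule mult_right_mono) (use j in auto)
        also have "\<dots> = 2 * real m ^ 2 / real n" by (simp add: power2_eq_square)
        finally show ?thesis .
      qed
      have "S i - rpoly H x = (\<Sum>j\<le>m. f j * (real (i choose j) / real (n choose j) - x ^ j))"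
        by (simp add: S_def rp sum_subtractf algebra_simps)
      then have "\<bar>S i - rpoly H x\<bar> \<le> (\<Sum>j\<le>m. \<bar>f j * (real (i choose j) / real (n choose j) - x ^ j)\<bar>)"
        by (simp only: sum_abs)
      also have "\<dots> \<le> (\<Sum>j\<le>m. \<bar>f j\<bar> * (2 * real m ^ 2 / real n))"
      proof (rule sum_mono)
        fix j assume "j \<in> {..m}"
        then show "\<bar>f j * (real (i choose j) / real (n choose j) - x ^ j)\<bar> \<le> \<bar>f j\<bar> * (2 * real m ^ 2 / real n)"
          unfolding abs_mult by (intro mult_left_mono tb) auto
      qed
      also have "\<dots> = A * (2 * real m ^ 2 / real n)" by (simp only: A_def sum_distrib_right)
      finally have "\<bar>S i - rpoly H x\<bar> < \<mu>" using err by simp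
      then show ?thesis using mux by linarith
    qed
    show "\<exists>c::nat\<Rightarrow>rat. (\<forall>i\<le>n. 0 \<le> c i) \<and>
           (\<forall>p::real. rpoly H p = (\<Sum>i\<le>n. of_rat (c i) * p ^ i * (1 - p) ^ (n - i)))"
    proof -
      have "\<forall>i\<le>n. 0 \<le> c i"
      proof (intro allI impI)
        fix i assume "i \<le> n"
        then have "0 \<le> (of_rat (c i) :: real)" using Spos[of i] by (simp add: cS)
        then show "0 \<le> c i" by simp
      qed
      then show ?thesis using repr by blast
    qed
  qed
qed


lemma open_pos:
  fixes F :: "rat poly"
  assumes pos: "\<And>p::real. 0 < p \<Longrightarrow> p < 1 \<Longrightarrow> rpoly F p > 0"
  shows "\<exists>k0. \<forall>k\<ge>k0. \<exists>c::nat\<Rightarrow>rat. (\<forall>i\<le>k. 0 \<le> c i) \<and>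
           (\<forall>p::real. rpoly F p = (\<Sum>i\<le>k. of_rat (c i) * p ^ i * (1 - p) ^ (k - i)))"
proof -
  have F0: "F \<noteq> 0" using pos[of "1/2"] by auto
  define a where "a = order 0 F"
  obtain G where G: "F = [:0,1:]^a * G" using order_1[of 0 F] unfolding a_def by (auto elim: dvdE)
  have G0: "G \<noteq> 0" using F0 G by auto
  have "order 0 F = a + order 0 G"
    using order_mult[of "[:0,1:]^a" G 0] G F0 order_power_n_n[of 0 a] by simp
  hence oG: "order 0 G = 0" by (simp add: a_def)
  define b where "b = order 1 G"
  obtain H where H: "G = [:-1,1:]^b * H" using order_1[of 1 G] unfolding b_def by (auto elim: dvdE)
  have H0: "H \<noteq> 0" using G0 H by auto
  have "order 1 G = b + order 1 H"
    using order_mult[of "[:-1,1:]^b" H 1] H G0 order_power_n_n[of 1 b] by simp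
  hence oH1: "order 1 H = 0" by (simp add: b_def)
  have "order 0 G = order 0 ([:-1,1:]^b :: rat poly) + order 0 H"
    using order_mult[of "[:-1,1:]^b" H 0] H G0 by simp
  hence oH0: "order 0 H = 0" using oG by simp
  have pH0: "poly H 0 \<noteq> 0" and pH1: "poly H 1 \<noteq> 0" using oH0 oH1 H0 order_root by blast+
  define H1 where "H1 = smult ((-1)^b) H"
  have eqF: "rpoly F p = p ^ a * (1 - p) ^ b * rpoly H1 p" for p
  proof -
    have "(-1 + p) ^ b = (-1) ^ b * (1 - p) ^ b"
      by (metis (no_types) mult_minus1 minus_diff_eq power_mult_distrib uminus_add_conv_diff)
    then show ?thesis using G H by (simp add: H1_def of_rat_power of_rat_minus)
  qed
  have H1pos: "rpoly H1 p > 0" if "0 < p" "p < 1" for p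
  proof -
    have "0 < p ^ a * (1 - p) ^ b" using that by simp
    then show ?thesis using pos[OF that] eqF[of p] by (metis zero_less_mult_iff not_less_iff_gr_or_eq)
  qed
  have nz0: "rpoly H1 0 \<noteq> 0" using rpoly_of_rat[of H1 0] pH0 by (simp add: H1_def)
  have nz1: "rpoly H1 1 \<noteq> 0" using rpoly_of_rat[of H1 1] pH1 by (simp add: H1_def)
  have p0: "rpoly H1 0 > 0"
  proof (rule ccontr)
    assume "\<not> rpoly H1 0 > 0"
    then have "rpoly H1 0 < 0" using nz0 by linarith
    then obtain x::real where "0 < x" "x < 1/2" "rpoly H1 x = 0"
      using poly_IVT_pos[of 0 "1/2" "map_poly of_rat H1"] H1pos[of "1/2"] by (auto simp: rpoly_def)
    then show False using H1pos[of x] by simp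
  qed
  have p1: "rpoly H1 1 > 0"
  proof (rule ccontr)
    assume "\<not> rpoly H1 1 > 0"
    then have "rpoly H1 1 < 0" using nz1 by linarith
    then obtain x::real where "1/2 < x" "x < 1" "rpoly H1 x = 0"
      using poly_IVT_neg[of "1/2" 1 "map_poly of_rat H1"] H1pos[of "1/2"] by (auto simp: rpoly_def)
    then show False using H1pos[of x] by simp
  qed
  have "\<And>p::real. 0 \<le> p \<Longrightarrow> p \<le> 1 \<Longrightarrow> rpoly H1 p > 0"
    using p0 p1 H1pos by (metis order_le_less)
  from bern_pos[OF this] obtain n0 where n0: "\<forall>n\<ge>n0. \<exists>c::nat\<Rightarrow>rat. (\<forall>i\<le>n. 0 \<le> c i) \<and>
           (\<forall>p::real. rpoly H1 p = (\<Sum>i\<le>n. of_rat (c i) * p ^ i * (1 - p) ^ (n - i)))" by blast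
  show ?thesis
  proof (rule exI[of _ "n0 + a + b"], intro allI impI)
    fix k assume k: "n0 + a + b \<le> k"
    define n where "n = k - a - b"
    have nn0: "n0 \<le> n" using k by (simp add: n_def)
    have kn: "k = a + n + b" using k by (simp add: n_def)
    obtain c where c0: "\<forall>i\<le>n. 0 \<le> c i"
      and cr: "\<forall>p::real. rpoly H1 p = (\<Sum>i\<le>n. of_rat (c i) * p ^ i * (1 - p) ^ (n - i))"
      using n0 nn0 by blast
    define c' where "c' i = (if a \<le> i \<and> i \<le> a + n then c (i - a) else 0)" for i
    have "rpoly F p = (\<Sum>i\<le>k. of_rat (c' i) * p ^ i * (1 - p) ^ (k - i))" for p :: real
    proof -
      have "rpoly F p = p ^ a * (1 - p) ^ b * (\<Sum>t\<le>n. of_rat (c t) * p ^ t * (1 - p) ^ (n - t))"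
        using eqF cr by simp
      also have "\<dots> = (\<Sum>t\<le>n. of_rat (c t) * p ^ (a + t) * (1 - p) ^ (k - (a + t)))"
        unfolding sum_distrib_left
      proof (intro sum.cong refl)
        fix t assume "t \<in> {..n}"
        then have "k - (a + t) = (n - t) + b" using kn by auto
        then show "p ^ a * (1 - p) ^ b * (of_rat (c t) * p ^ t * (1 - p) ^ (n - t))
            = of_rat (c t) * p ^ (a + t) * (1 - p) ^ (k - (a + t))"
          by (simp add: power_add mult_ac)
      qed
      also have "\<dots> = (\<Sum>i\<le>k. if a \<le> i \<and> i \<le> a + n then
            of_rat (c (i - a)) * p ^ (a + (i - a)) * (1 - p) ^ (k - (a + (i - a))) else 0)"
        using kn by (intro sum_shift_if[symmetric]) simp
      also have "\<dots> = (\<Sum>i\<le>k. of_rat (c' i) * p ^ i * (1 - p) ^ (k - i))"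
        by (intro sum.cong refl) (auto simp: c'_def)
      finally show ?thesis .
    qed
    moreover have "\<forall>i\<le>k. 0 \<le> c' i" using c0 by (auto simp: c'_def)
    ultimately show "\<exists>c::nat\<Rightarrow>rat. (\<forall>i\<le>k. 0 \<le> c i) \<and>
           (\<forall>p::real. rpoly F p = (\<Sum>i\<le>k. of_rat (c i) * p ^ i * (1 - p) ^ (k - i)))" by blast
  qed
qed


lemma common_denom:
  fixes A :: "rat set"
  assumes "finite A"
  shows "\<exists>D::int. D > 0 \<and> (\<forall>x\<in>A. of_int D * x \<in> \<int>)"
  using assms
proof (induction A rule: finite_induct)
  case empty
  then show ?case by (intro exI[of _ 1]) auto
next
  case (insert x A)
  then obtain D where D: "D > 0" "\<forall>y\<in>A. of_int D * y \<in> \<int>" by blast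
  obtain a b where ab: "quotient_of x = (a, b)" by (cases "quotient_of x")
  have b0: "b > 0" using quotient_of_denom_pos[OF ab] .
  have xab: "x = of_int a / of_int b" using quotient_of_div[OF ab] .
  have "of_int (D * b) * x = of_int (D * a)" using b0 xab by simp
  moreover have "of_int (D * b) * y \<in> \<int>" if "y \<in> A" for y
  proof -
    have "of_int (D * b) * y = of_int b * (of_int D * y)" by simp
    then show ?thesis using D(2) that by (metis Ints_mult Ints_of_int)
  qed
  ultimately have "\<forall>y\<in>insert x A. of_int (D * b) * y \<in> \<int>"
    by (metis Ints_of_int insert_iff)
  then show ?case using D b0 by (intro exI[of _ "D * b"]) auto
qed

lemma floor_Ints_rat: "(x::rat) \<in> \<int> \<Longrightarrow> of_int \<lfloor>x\<rfloor> = x"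
  by (elim Ints_cases) simp

lemma main_pos:
  fixes P Q :: "rat poly"
  assumes Qpos: "\<And>p::real. 0 < p \<Longrightarrow> p < 1 \<Longrightarrow> rpoly Q p > 0"
    and ratio: "\<And>p::real. 0 < p \<Longrightarrow> p < 1 \<Longrightarrow> 0 < rpoly P p / rpoly Q p \<and> rpoly P p / rpoly Q p < 1"
  shows "\<exists>(k::nat) (d::nat \<Rightarrow> int) (e::nat \<Rightarrow> int).
           (\<forall>i\<le>k. 0 \<le> d i \<and> d i \<le> e i) \<and>
           (\<forall>p::real. 0 < p \<and> p < 1 \<longrightarrow>
              (\<Sum>i\<le>k. of_int (e i) * p ^ i * (1 - p) ^ (k - i)) \<noteq> 0 \<and>
              rpoly P p / rpoly Q p =
                (\<Sum>i\<le>k. of_int (d i) * p ^ i * (1 - p) ^ (k - i)) /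
                (\<Sum>i\<le>k. of_int (e i) * p ^ i * (1 - p) ^ (k - i)))"
proof -
  have Ppos: "rpoly P p > 0" if "0 < p" "p < 1" for p :: real
    using ratio[OF that] Qpos[OF that] by (simp add: zero_less_divide_iff)
  have Rpos: "rpoly (Q - P) p > 0" if "0 < p" "p < 1" for p :: real
    using ratio[OF that] Qpos[OF that] by (simp add: divide_less_eq)
  obtain k1 where k1: "\<forall>k\<ge>k1. \<exists>c::nat\<Rightarrow>rat. (\<forall>i\<le>k. 0 \<le> c i) \<and>
           (\<forall>p::real. rpoly P p = (\<Sum>i\<le>k. of_rat (c i) * p ^ i * (1 - p) ^ (k - i)))"
    using open_pos[OF Ppos] by blast
  obtain k2 where k2: "\<forall>k\<ge>k2. \<exists>c::nat\<Rightarrow>rat. (\<forall>i\<le>k. 0 \<le> c i) \<and>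
           (\<forall>p::real. rpoly (Q - P) p = (\<Sum>i\<le>k. of_rat (c i) * p ^ i * (1 - p) ^ (k - i)))"
    using open_pos[OF Rpos] by blast
  define k where "k = max k1 k2"
  obtain cP where cP0: "\<forall>i\<le>k. 0 \<le> cP i"
    and cPr: "\<forall>p::real. rpoly P p = (\<Sum>i\<le>k. of_rat (cP i) * p ^ i * (1 - p) ^ (k - i))"
    using k1[rule_format, of k] by (auto simp: k_def)
  obtain cR where cR0: "\<forall>i\<le>k. 0 \<le> cR i"
    and cRr: "\<forall>p::real. rpoly (Q - P) p = (\<Sum>i\<le>k. of_rat (cR i) * p ^ i * (1 - p) ^ (k - i))"
    using k2[rule_format, of k] by (auto simp: k_def)
  define cQ where "cQ i = cP i + cR i" for i
  have cQr: "rpoly Q p = (\<Sum>i\<le>k. of_rat (cQ i) * p ^ i * (1 - p) ^ (k - i))" for p :: real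
  proof -
    have "rpoly Q p = rpoly P p + rpoly (Q - P) p" by simp
    also have "\<dots> = (\<Sum>i\<le>k. of_rat (cQ i) * p ^ i * (1 - p) ^ (k - i))"
      using cPr cRr by (simp add: cQ_def of_rat_add distrib_right sum.distrib)
    finally show ?thesis .
  qed
  obtain D :: int where D0: "D > 0" and DA: "\<forall>x\<in>cP ` {..k} \<union> cQ ` {..k}. of_int D * x \<in> \<int>"
    using common_denom[of "cP ` {..k} \<union> cQ ` {..k}"] by auto
  define d where "d i = \<lfloor>of_int D * cP i\<rfloor>" for i
  define e where "e i = \<lfloor>of_int D * cQ i\<rfloor>" for i
  have dq: "(of_int (d i) :: real) = of_int D * of_rat (cP i)" if "i \<le> k" for i
  proof -
    have "of_int (d i) = of_int D * cP i" unfolding d_def using DA that by (intro floor_Ints_rat) auto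
    then have "(of_rat (of_int (d i)) :: real) = of_rat (of_int D * cP i)" by simp
    then show ?thesis by (simp add: of_rat_mult)
  qed
  have eq: "(of_int (e i) :: real) = of_int D * of_rat (cQ i)" if "i \<le> k" for i
  proof -
    have "of_int (e i) = of_int D * cQ i" unfolding e_def using DA that by (intro floor_Ints_rat) auto
    then have "(of_rat (of_int (e i)) :: real) = of_rat (of_int D * cQ i)" by simp
    then show ?thesis by (simp add: of_rat_mult)
  qed
  have sd: "(\<Sum>i\<le>k. of_int (d i) * p ^ i * (1 - p) ^ (k - i)) = of_int D * rpoly P p" for p :: real
    using cPr by (simp add: dq sum_distrib_left mult_ac)
  have se: "(\<Sum>i\<le>k. of_int (e i) * p ^ i * (1 - p) ^ (k - i)) = of_int D * rpoly Q p" for p :: real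
    using cQr[of p] by (simp add: eq sum_distrib_left mult_ac)
  have de: "\<forall>i\<le>k. 0 \<le> d i \<and> d i \<le> e i"
    using cP0 cR0 D0 by (auto simp: d_def e_def cQ_def intro!: floor_mono mult_left_mono)
  have "\<forall>p::real. 0 < p \<and> p < 1 \<longrightarrow>
              (\<Sum>i\<le>k. of_int (e i) * p ^ i * (1 - p) ^ (k - i)) \<noteq> 0 \<and>
              rpoly P p / rpoly Q p =
                (\<Sum>i\<le>k. of_int (d i) * p ^ i * (1 - p) ^ (k - i)) /
                (\<Sum>i\<le>k. of_int (e i) * p ^ i * (1 - p) ^ (k - i))"
  proof (intro allI impI)
    fix p :: real assume p: "0 < p \<and> p < 1"
    then have "rpoly Q p > 0" using Qpos by auto
    then show "(\<Sum>i\<le>k. of_int (e i) * p ^ i * (1 - p) ^ (k - i)) \<noteq> 0 \<and>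
              rpoly P p / rpoly Q p =
                (\<Sum>i\<le>k. of_int (d i) * p ^ i * (1 - p) ^ (k - i)) /
                (\<Sum>i\<le>k. of_int (e i) * p ^ i * (1 - p) ^ (k - i))"
      unfolding sd se using D0 by auto
  qed
  then show ?thesis using de by blast
qed

theorem lemma2p7:
  fixes P Q :: "rat poly"
  assumes "Q \<noteq> 0" and "coprime P Q"
    and "\<And>p::real. 0 < p \<Longrightarrow> p < 1 \<Longrightarrow> rpoly Q p \<noteq> 0"
    and "\<And>p::real. 0 < p \<Longrightarrow> p < 1 \<Longrightarrow> 0 < rpoly P p / rpoly Q p \<and> rpoly P p / rpoly Q p < 1"
  shows "\<exists>(k::nat) (d::nat \<Rightarrow> int) (e::nat \<Rightarrow> int).
           (\<forall>i\<le>k. 0 \<le> d i \<and> d i \<le> e i) \<and>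
           (\<forall>p::real. 0 < p \<and> p < 1 \<longrightarrow>
              (\<Sum>i\<le>k. of_int (e i) * p ^ i * (1 - p) ^ (k - i)) \<noteq> 0 \<and>
              rpoly P p / rpoly Q p =
                (\<Sum>i\<le>k. of_int (d i) * p ^ i * (1 - p) ^ (k - i)) /
                (\<Sum>i\<le>k. of_int (e i) * p ^ i * (1 - p) ^ (k - i)))"
proof (cases "rpoly Q (1/2) > 0")
  case True
  have "rpoly Q p > 0" if p: "0 < p" "p < 1" for p :: real
  proof (rule ccontr)
    assume "\<not> rpoly Q p > 0"
    then have neg: "rpoly Q p < 0" using assms(3)[OF p] by linarith
    show False
    proof (cases "p < 1/2")
      case True
      then obtain x::real where "p < x" "x < 1/2" "rpoly Q x = 0"
        using poly_IVT_pos[of p "1/2" "map_poly of_rat Q"] neg \<open>rpoly Q (1/2) > 0\<close> by (auto simp: rpoly_def)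
      then show False using assms(3)[of x] p by simp
    next
      case False
      then have "1/2 < p" using neg \<open>rpoly Q (1/2) > 0\<close> by (cases "p = 1/2") auto
      then obtain x::real where "1/2 < x" "x < p" "rpoly Q x = 0"
        using poly_IVT_neg[of "1/2" p "map_poly of_rat Q"] neg \<open>rpoly Q (1/2) > 0\<close> by (auto simp: rpoly_def)
      then show False using assms(3)[of x] p by simp
    qed
  qed
  then show ?thesis using main_pos[of Q P] assms(4) by blast
next
  case False
  then have neg12: "rpoly Q (1/2) < 0" using assms(3)[of "1/2"] by linarith
  have "rpoly (- Q) p > 0" if p: "0 < p" "p < 1" for p :: real
  proof (rule ccontr)
    assume "\<not> rpoly (- Q) p > 0"
    then have pos: "rpoly Q p > 0" using assms(3)[OF p] by simp
    show False
    proof (cases "p < 1/2")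
      case True
      then obtain x::real where "p < x" "x < 1/2" "rpoly Q x = 0"
        using poly_IVT_neg[of p "1/2" "map_poly of_rat Q"] pos neg12 by (auto simp: rpoly_def)
      then show False using assms(3)[of x] p by simp
    next
      case False
      then have "1/2 < p" using pos neg12 by (cases "p = 1/2") auto
      then obtain x::real where "1/2 < x" "x < p" "rpoly Q x = 0"
        using poly_IVT_pos[of "1/2" p "map_poly of_rat Q"] pos neg12 by (auto simp: rpoly_def)
      then show False using assms(3)[of x] p by simp
    qed
  qed
  moreover have "0 < rpoly (- P) p / rpoly (- Q) p \<and> rpoly (- P) p / rpoly (- Q) p < 1"
    if "0 < p" "p < 1" for p :: real
    using assms(4)[OF that] by simp
  ultimately show ?thesis using main_pos[of "- Q" "- P"] by simp
qed

end
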